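(* Let $\mathcal B$ be any board, let $q'>q>0$ be integers, and let $\mathsf P$ and $\mathsf P'$ be rider pieces such that every basic move of $\mathsf P$ is also a basic move of $\mathsf P'$. Then $D_q(\mathsf P)\mid D_{q'}(\mathsf P)$ and $D_q(\mathsf P)\mid D_q(\mathsf P')$.
   Context: A board $\mathcal B$ is a convex polygon in $\mathbb R^2$ with rational corners. A rider piece $\mathsf P$ has a finite set $\mathcal M$ of basic moves: nonzero integer vectors $(c,d)$ with $\gcd(c,d)=1$, no two parallel. For $q$ pieces, the move arrangement $\mathcal A^q_{\mathsf P}$ in $\mathbb R^{2q}$ consists of the hyperplanes $\mathcal H^{d/c}_{ij}=\{(z_1,\dots,z_q):(z_j-z_i)\cdot(d,-c)=0\}$, $1\le i<j\le q$, $(c,d)\in\mathcal M$. A vertex of the inside-out polytope $(\mathcal B^q,\mathcal A^q_{\mathsf P})$ is a point of $\mathcal B^q$ that is the unique point of an intersection of some hyperplanes of $\mathcal A^q_{\mathsf P}$ and some affine hulls of facets of $\mathcal B^q$. The denominator $D_q(\mathsf P)=D(\mathcal B^q,\mathcal A^q_{\mathsf P})$ is the least common multiple of the least common denominators of the coordinates of all such vertices. *)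

theory Defs
  imports "HOL-Analysis.Analysis"
begin

definition board :: "(real \<times> real) set \<Rightarrow> bool" where
  "board B \<longleftrightarrow> (\<exists>V. finite V \<and> (\<forall>v\<in>V. fst v \<in> \<rat> \<and> snd v \<in> \<rat>)
                  \<and> B = convex hull V) \<and> interior B \<noteq> {}"

definition rider_moves :: "(int \<times> int) set \<Rightarrow> bool" where
  "rider_moves M \<longleftrightarrow> finite M \<and>
     (\<forall>(c,d)\<in>M. (c,d) \<noteq> (0,0) \<and> gcd c d = 1) \<and>
     (\<forall>(c,d)\<in>M. \<forall>(c',d')\<in>M. (c,d) \<noteq> (c',d') \<longrightarrow> c * d' \<noteq> c' * d)"

(* Points of \<real>^2^q: configurations z with z i \<in> \<real>^2 for i < q, extended by 0. *)
definition config_space :: "nat \<Rightarrow> (nat \<Rightarrow> real \<times> real) set" where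
  "config_space q = {z. \<forall>i\<ge>q. z i = (0,0)}"

definition board_power :: "(real \<times> real) set \<Rightarrow> nat \<Rightarrow> (nat \<Rightarrow> real \<times> real) set" where
  "board_power B q = {z \<in> config_space q. \<forall>i<q. z i \<in> B}"

definition move_hyperplane :: "nat \<Rightarrow> (nat \<times> nat \<times> (int \<times> int)) \<Rightarrow> (nat \<Rightarrow> real \<times> real) set" where
  "move_hyperplane q h = (case h of (i, j, (c, d)) \<Rightarrow>
     {z \<in> config_space q. (fst (z j) - fst (z i)) * of_int d - (snd (z j) - snd (z i)) * of_int c = 0})"

definition arrangement_index :: "(int \<times> int) set \<Rightarrow> nat \<Rightarrow> (nat \<times> nat \<times> (int \<times> int)) set" where
  "arrangement_index M q = {(i, j, m). i < j \<and> j < q \<and> m \<in> M}"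

(* Affine hulls of facets of B^q: the facets of B^q are the sets where one factor
  z_i lies in a facet F (edge) of B, so their affine hulls are {z. z_i \<in> aff F}. *)
definition facet_hull :: "nat \<Rightarrow> (nat \<times> (real \<times> real) set) \<Rightarrow> (nat \<Rightarrow> real \<times> real) set" where
  "facet_hull q f = (case f of (i, F) \<Rightarrow> {z \<in> config_space q. z i \<in> affine hull F})"

definition facet_index :: "(real \<times> real) set \<Rightarrow> nat \<Rightarrow> (nat \<times> (real \<times> real) set) set" where
  "facet_index B q = {(i, F). i < q \<and> F facet_of B}"

definition iop_vertex :: "(real \<times> real) set \<Rightarrow> (int \<times> int) set \<Rightarrow> nat \<Rightarrow> (nat \<Rightarrow> real \<times> real) \<Rightarrow> bool" where
  "iop_vertex B M q z \<longleftrightarrow> z \<in> board_power B q \<and>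
     (\<exists>Hs Fs. Hs \<subseteq> arrangement_index M q \<and> Fs \<subseteq> facet_index B q \<and>
        config_space q \<inter> (\<Inter>h\<in>Hs. move_hyperplane q h) \<inter> (\<Inter>f\<in>Fs. facet_hull q f) = {z})"

definition coord_lcd :: "nat \<Rightarrow> (nat \<Rightarrow> real \<times> real) \<Rightarrow> nat" where
  "coord_lcd q z = (LEAST d::nat. d > 0 \<and>
     (\<forall>i<q. real d * fst (z i) \<in> \<int> \<and> real d * snd (z i) \<in> \<int>))"

definition denom :: "(real \<times> real) set \<Rightarrow> (int \<times> int) set \<Rightarrow> nat \<Rightarrow> nat" where
  "denom B M q = Lcm {coord_lcd q z | z. iop_vertex B M q z}"

end

theory Submission
  imports Defs
begin

lemma vertex_mono_M:
  assumes "M \<subseteq> M'" "iop_vertex B M q z"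
  shows "iop_vertex B M' q z"
proof -
  have "arrangement_index M q \<subseteq> arrangement_index M' q"
    using assms(1) unfolding arrangement_index_def by auto
  from assms(2) obtain Hs Fs where "z \<in> board_power B q" "Hs \<subseteq> arrangement_index M q"
    "Fs \<subseteq> facet_index B q"
    "config_space q \<inter> (\<Inter>h\<in>Hs. move_hyperplane q h) \<inter> (\<Inter>f\<in>Fs. facet_hull q f) = {z}"
    unfolding iop_vertex_def by meson
  moreover have "Hs \<subseteq> arrangement_index M' q" using calculation(2) \<open>_ \<subseteq> arrangement_index M' q\<close> by (rule order.trans)
  ultimately show ?thesis unfolding iop_vertex_def by meson
qed

lemma vertex_extend:
  assumes v: "iop_vertex B M q z" and q: "0 < q" "q < q'"
  defines "z' \<equiv> (\<lambda>i. if i < q then z i else if i < q' then z 0 else (0,0))"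
  shows "iop_vertex B M q' z' \<and> coord_lcd q' z' = coord_lcd q z"
proof -
  from v obtain Hs Fs where zB: "z \<in> board_power B q" and Hs: "Hs \<subseteq> arrangement_index M q"
    and Fs: "Fs \<subseteq> facet_index B q"
    and eq: "config_space q \<inter> (\<Inter>h\<in>Hs. move_hyperplane q h) \<inter> (\<Inter>f\<in>Fs. facet_hull q f) = {z}"
    unfolding iop_vertex_def by blast
  define Hs' where "Hs' = Hs \<union> {(k, j, m) | k j m. (0,k,m) \<in> Hs \<and> q \<le> j \<and> j < q'}"
  define Fs' where "Fs' = Fs \<union> {(j, F) | j F. (0,F) \<in> Fs \<and> q \<le> j \<and> j < q'}"
  have zc: "z \<in> config_space q" using zB unfolding board_power_def by auto
  have zin: "z \<in> config_space q \<inter> (\<Inter>h\<in>Hs. move_hyperplane q h) \<inter> (\<Inter>f\<in>Fs. facet_hull q f)"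
    using eq by auto
  have zH: "\<And>i k c d. (i,k,(c,d)) \<in> Hs \<Longrightarrow>
      (fst (z k) - fst (z i)) * of_int d - (snd (z k) - snd (z i)) * of_int c = 0"
  proof -
    fix i k c d assume "(i,k,(c,d)) \<in> Hs"
    hence "z \<in> move_hyperplane q (i,k,(c,d))" using zin by blast
    thus "(fst (z k) - fst (z i)) * of_int d - (snd (z k) - snd (z i)) * of_int c = 0"
      unfolding move_hyperplane_def by simp
  qed
  have zF: "\<And>i F. (i,F) \<in> Fs \<Longrightarrow> z i \<in> affine hull F"
  proof -
    fix i F assume "(i,F) \<in> Fs"
    hence "z \<in> facet_hull q (i,F)" using zin by blast
    thus "z i \<in> affine hull F" unfolding facet_hull_def by simp
  qed
  have Hidx: "\<And>i k m. (i,k,m) \<in> Hs \<Longrightarrow> i < k \<and> k < q \<and> m \<in> M"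
    using Hs unfolding arrangement_index_def by auto
  have Fidx: "\<And>i F. (i,F) \<in> Fs \<Longrightarrow> i < q"
    using Fs unfolding facet_index_def by auto
  have z'c: "z' \<in> config_space q'" unfolding config_space_def z'_def using q by auto
  have z'q: "\<And>i. i < q \<Longrightarrow> z' i = z i" unfolding z'_def by auto
  have zBi: "\<And>i. i < q \<Longrightarrow> z i \<in> B" using zB unfolding board_power_def by auto
  have z'B: "z' \<in> board_power B q'"
    unfolding board_power_def
  proof (intro CollectI conjI allI impI z'c)
    fix i assume "i < q'"
    show "z' i \<in> B" using zBi q \<open>i < q'\<close> unfolding z'_def by (cases "i < q") auto
  qed
  have Hs'sub: "Hs' \<subseteq> arrangement_index M q'"
    unfolding Hs'_def arrangement_index_def using Hidx q by fastforce
  have Fs'sub: "Fs' \<subseteq> facet_index B q'"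
    using Fs q unfolding Fs'_def facet_index_def by auto
  have "config_space q' \<inter> (\<Inter>h\<in>Hs'. move_hyperplane q' h) \<inter> (\<Inter>f\<in>Fs'. facet_hull q' f) = {z'}"
  proof (rule set_eqI, rule iffI)
    fix w assume w: "w \<in> config_space q' \<inter> (\<Inter>h\<in>Hs'. move_hyperplane q' h) \<inter> (\<Inter>f\<in>Fs'. facet_hull q' f)"
    have wc: "\<And>i. q' \<le> i \<Longrightarrow> w i = (0,0)" using w unfolding config_space_def by auto
    have wH: "\<And>i k c d. (i,k,(c,d)) \<in> Hs' \<Longrightarrow>
      (fst (w k) - fst (w i)) * of_int d - (snd (w k) - snd (w i)) * of_int c = 0"
    proof -
      fix i k c d assume "(i,k,(c,d)) \<in> Hs'"
      hence "w \<in> move_hyperplane q' (i,k,(c,d))" using w by blast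
      thus "(fst (w k) - fst (w i)) * of_int d - (snd (w k) - snd (w i)) * of_int c = 0"
        unfolding move_hyperplane_def by simp
    qed
    have wF: "\<And>i F. (i,F) \<in> Fs' \<Longrightarrow> w i \<in> affine hull F"
    proof -
      fix i F assume "(i,F) \<in> Fs'"
      hence "w \<in> facet_hull q' (i,F)" using w by blast
      thus "w i \<in> affine hull F" unfolding facet_hull_def by simp
    qed
    define u where "u = (\<lambda>i. if i < q then w i else (0,0))"
    have "u \<in> config_space q \<inter> (\<Inter>h\<in>Hs. move_hyperplane q h) \<inter> (\<Inter>f\<in>Fs. facet_hull q f)"
    proof -
      have "u \<in> config_space q" unfolding u_def config_space_def by auto
      moreover have "u \<in> move_hyperplane q h" if "h \<in> Hs" for h
      proof -
        obtain i k c d where h: "h = (i,k,(c,d))" by (metis prod.exhaust)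
        have "i < k" "k < q" using Hidx[of i k "(c,d)"] that h by simp_all
        moreover have "(i,k,(c,d)) \<in> Hs'" using that h unfolding Hs'_def by simp
        ultimately show ?thesis using wH[of i k c d] \<open>u \<in> config_space q\<close>
          unfolding move_hyperplane_def h u_def by auto
      qed
      moreover have "u \<in> facet_hull q f" if "f \<in> Fs" for f
      proof -
        obtain i F where f: "f = (i,F)" by (metis prod.exhaust)
        have "i < q" using Fidx[of i F] that f by simp
        moreover have "(i,F) \<in> Fs'" using that f unfolding Fs'_def by simp
        ultimately show ?thesis using wF[of i F] \<open>u \<in> config_space q\<close>
          unfolding facet_hull_def f u_def by auto
      qed
      ultimately show ?thesis by auto
    qed
    hence uz: "u = z" using eq by auto
    have wq: "w i = z i" if "i < q" for i
    proof -
      have "u i = z i" using uz by simp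
      thus ?thesis using that by (simp add: u_def)
    qed
    have wj: "w j = z 0" if j: "q \<le> j" "j < q'" for j
    proof -
      define v where "v = z(0 := w j)"
      have vc: "v \<in> config_space q" using zc q unfolding v_def config_space_def by auto
      have "v \<in> config_space q \<inter> (\<Inter>h\<in>Hs. move_hyperplane q h) \<inter> (\<Inter>f\<in>Fs. facet_hull q f)"
      proof -
        have "v \<in> move_hyperplane q h" if "h \<in> Hs" for h
        proof -
          obtain i k c d where h: "h = (i,k,(c,d))" by (metis prod.exhaust)
          have ik: "i < k" "k < q" using Hidx[of i k "(c,d)"] that h by simp_all
          show ?thesis
          proof (cases "i = 0")
            case True
            have "(k,j,(c,d)) \<in> Hs'" using that h True j unfolding Hs'_def by simp
            hence "(fst (w j) - fst (w k)) * of_int d - (snd (w j) - snd (w k)) * of_int c = 0"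
              using wH by blast
            moreover have "w k = z k" using wq[of k] ik by simp
            ultimately show ?thesis using vc True ik
              unfolding move_hyperplane_def h v_def by (auto simp: algebra_simps)
          next
            case False
            then show ?thesis using vc ik zH[of i k c d] that h
              unfolding move_hyperplane_def v_def by auto
          qed
        qed
        moreover have "v \<in> facet_hull q f" if "f \<in> Fs" for f
        proof -
          obtain i F where f: "f = (i,F)" by (metis prod.exhaust)
          show ?thesis
          proof (cases "i = 0")
            case True
            have "(j,F) \<in> Fs'" using that f True j unfolding Fs'_def by simp
            then show ?thesis using wF[of j F] vc True unfolding facet_hull_def f v_def by simp
          next
            case False
            then show ?thesis using vc zF[of i F] that f unfolding facet_hull_def v_def by auto
          qed
        qed
        ultimately show ?thesis using vc by auto
      qed
      hence "v = z" using eq by auto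
      hence "v 0 = z 0" by simp
      thus ?thesis unfolding v_def by simp
    qed
    have "w = z'"
    proof
      fix i show "w i = z' i"
        using wq[of i] wj[of i] wc[of i] unfolding z'_def by (cases "i < q"; cases "i < q'") simp_all
    qed
    thus "w \<in> {z'}" by simp
  next
    fix w assume "w \<in> {z'}"
    hence w: "w = z'" by simp
    have "z' \<in> move_hyperplane q' h" if "h \<in> Hs'" for h
    proof -
      obtain i k c d where h: "h = (i,k,(c,d))" by (metis prod.exhaust)
      show ?thesis
      proof (cases "h \<in> Hs")
        case True
        hence ik: "i < k" "k < q" using Hidx[of i k "(c,d)"] h by simp_all
        have "z' i = z i" "z' k = z k" using z'q[of i] z'q[of k] ik by simp_all
        then show ?thesis using zH[of i k c d] True h z'c
          unfolding move_hyperplane_def by simp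
      next
        case False
        hence "(0,i,(c,d)) \<in> Hs" "q \<le> k" "k < q'" using that h unfolding Hs'_def by auto
        moreover have "0 < i" "i < q" using Hidx[of 0 i "(c,d)"] calculation(1) by simp_all
        ultimately show ?thesis using zH[of 0 i c d] h z'c
          unfolding move_hyperplane_def z'_def by (auto simp: algebra_simps)
      qed
    qed
    moreover have "z' \<in> facet_hull q' f" if "f \<in> Fs'" for f
    proof -
      obtain i F where f: "f = (i,F)" by (metis prod.exhaust)
      show ?thesis
      proof (cases "f \<in> Fs")
        case True
        hence "i < q" "(i,F) \<in> Fs" using Fidx[of i F] f by simp_all
        then show ?thesis using zF[of i F] f z'c z'q[of i] unfolding facet_hull_def by simp
      next
        case False
        hence "(0,F) \<in> Fs" "q \<le> i" "i < q'" using that f unfolding Fs'_def by auto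
        then show ?thesis using zF[of 0 F] f z'c unfolding facet_hull_def z'_def by auto
      qed
    qed
    ultimately show "w \<in> config_space q' \<inter> (\<Inter>h\<in>Hs'. move_hyperplane q' h) \<inter> (\<Inter>f\<in>Fs'. facet_hull q' f)"
      using w z'c by auto
  qed
  hence vert: "iop_vertex B M q' z'"
    unfolding iop_vertex_def using z'B Hs'sub Fs'sub by blast
  have P: "(\<lambda>d::nat. d > 0 \<and> (\<forall>i<q'. real d * fst (z' i) \<in> \<int> \<and> real d * snd (z' i) \<in> \<int>))
         = (\<lambda>d. d > 0 \<and> (\<forall>i<q. real d * fst (z i) \<in> \<int> \<and> real d * snd (z i) \<in> \<int>))"
  proof (rule ext, rule iffI)
    fix d assume "0 < d \<and> (\<forall>i<q'. real d * fst (z' i) \<in> \<int> \<and> real d * snd (z' i) \<in> \<int>)"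
    thus "0 < d \<and> (\<forall>i<q. real d * fst (z i) \<in> \<int> \<and> real d * snd (z i) \<in> \<int>)"
    proof -
      assume a: "0 < d \<and> (\<forall>i<q'. real d * fst (z' i) \<in> \<int> \<and> real d * snd (z' i) \<in> \<int>)"
      have "\<forall>i<q. real d * fst (z i) \<in> \<int> \<and> real d * snd (z i) \<in> \<int>"
      proof (intro allI impI)
        fix i assume "i < q"
        hence "i < q'" "z' i = z i" using q z'q[of i] by simp_all
        thus "real d * fst (z i) \<in> \<int> \<and> real d * snd (z i) \<in> \<int>" using a by metis
      qed
      thus ?thesis using a by simp
    qed
  next
    fix d assume a: "0 < d \<and> (\<forall>i<q. real d * fst (z i) \<in> \<int> \<and> real d * snd (z i) \<in> \<int>)"
    show "0 < d \<and> (\<forall>i<q'. real d * fst (z' i) \<in> \<int> \<and> real d * snd (z' i) \<in> \<int>)"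
    proof (intro conjI allI impI)
      show "0 < d" using a by simp
    next
      fix i assume "i < q'"
      show "real d * fst (z' i) \<in> \<int>" using a q \<open>i < q'\<close> unfolding z'_def by auto
    next
      fix i assume "i < q'"
      show "real d * snd (z' i) \<in> \<int>" using a q \<open>i < q'\<close> unfolding z'_def by auto
    qed
  qed
  have "coord_lcd q' z' = coord_lcd q z" unfolding coord_lcd_def P ..
  with vert show ?thesis by simp
qed

theorem proposition3p2:
  fixes B :: "(real \<times> real) set" and M M' :: "(int \<times> int) set" and q q' :: nat
  assumes "board B" and "rider_moves M" and "rider_moves M'" and "M \<subseteq> M'"
    and "0 < q" and "q < q'"
  shows "denom B M q dvd denom B M q' \<and> denom B M q dvd denom B M' q"
proof
  have "{coord_lcd q z | z. iop_vertex B M q z} \<subseteq> {coord_lcd q' z | z. iop_vertex B M q' z}"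
  proof
    fix x assume "x \<in> {coord_lcd q z | z. iop_vertex B M q z}"
    then obtain z where "x = coord_lcd q z" "iop_vertex B M q z" by blast
    have "\<exists>z'. iop_vertex B M q' z' \<and> coord_lcd q' z' = coord_lcd q z"
      using vertex_extend[OF \<open>iop_vertex B M q z\<close> assms(5,6)] by blast
    then obtain z' where z': "iop_vertex B M q' z'" "coord_lcd q' z' = x"
      using \<open>x = _\<close> by auto
    show "x \<in> {coord_lcd q' z | z. iop_vertex B M q' z}"
      unfolding mem_Collect_eq using z' by metis
  qed
  thus "denom B M q dvd denom B M q'" unfolding denom_def by (rule Lcm_subset)
next
  have "{coord_lcd q z | z. iop_vertex B M q z} \<subseteq> {coord_lcd q z | z. iop_vertex B M' q z}"
    using vertex_mono_M[OF assms(4)] by blast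
  thus "denom B M q dvd denom B M' q" unfolding denom_def by (rule Lcm_subset)
qed

end
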